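(* Fix a multi-time quantum process except for the channel at one time step $t_j$, and fix all measurements. For CPTP maps $\mathcal{E}_{t_j\leftarrow t_{j-1}}$ and $\mathcal{K}_{t_j\leftarrow t_{j-1}}$ from $t_{j-1}$ to $t_j$ and $\lambda\in[0,1]$, writing $\overrightarrow{Q}_{\rm KD}[\mathcal{F}]$ for the right temporal KD distribution of the process whose channel at step $t_j$ is $\mathcal{F}$, $$\mathcal{N}\big[\overrightarrow{Q}_{\rm KD}[\lambda\mathcal{E}_{t_j\leftarrow t_{j-1}}+(1-\lambda)\mathcal{K}_{t_j\leftarrow t_{j-1}}]\big]\le\lambda\,\mathcal{N}\big[\overrightarrow{Q}_{\rm KD}[\mathcal{E}_{t_j\leftarrow t_{j-1}}]\big]+(1-\lambda)\,\mathcal{N}\big[\overrightarrow{Q}_{\rm KD}[\mathcal{K}_{t_j\leftarrow t_{j-1}}]\big].$$ The same holds for the left and doubled temporal KD distributions.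
   Context: A multi-time quantum process $(\rho_{t_0},\mathcal{E}_{t_1\leftarrow t_0},\dots,\mathcal{E}_{t_n\leftarrow t_{n-1}})$ consists of a density operator and CPTP maps on finite-dimensional spaces, extended linearly to all operators; complete families of orthogonal projectors are fixed at each time. $\overrightarrow{Q}_{\rm KD}(b_n,\dots,b_0)=\operatorname{Tr}[\mathcal{E}_{t_n\leftarrow t_{n-1}}(\cdots\mathcal{E}_{t_1\leftarrow t_0}(\rho_{t_0}\Pi^{t_0}_{b_0})\Pi^{t_1}_{b_1}\cdots)\Pi^{t_n}_{b_n}]$; $\overleftarrow{Q}_{\rm KD}(a_n,\dots,a_0)=\operatorname{Tr}[\Pi^{t_n}_{a_n}\mathcal{E}_{t_n\leftarrow t_{n-1}}(\cdots\Pi^{t_1}_{a_1}\mathcal{E}_{t_1\leftarrow t_0}(\Pi^{t_0}_{a_0}\rho_{t_0})\cdots)]$; $\overleftrightarrow{Q}_{\rm KD}(a;b)=\operatorname{Tr}[\Pi^{t_n}_{a_n}\mathcal{E}_{t_n\leftarrow t_{n-1}}(\cdots\Pi^{t_1}_{a_1}\mathcal{E}_{t_1\leftarrow t_0}(\Pi^{t_0}_{a_0}\rho_{t_0}\Pi^{t_0}_{b_0})\Pi^{t_1}_{b_1}\cdots)\Pi^{t_n}_{b_n}]$. For any such distribution $Q$, $\mathcal{N}[Q]=\sum_{\text{all outcomes}}|Q|-1$. *)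

theory Defs
  imports "HOL-Library.FuncSet" "Jordan_Normal_Form.Schur_Decomposition"
begin

definition mtrace :: "complex mat \<Rightarrow> complex" where
  "mtrace A = (\<Sum>i<dim_row A. A $$ (i, i))"

definition psd :: "nat \<Rightarrow> complex mat \<Rightarrow> bool" where
  "psd d A \<longleftrightarrow> A \<in> carrier_mat d d \<and>
     (\<forall>v \<in> carrier_vec d. Im ((A *\<^sub>v v) \<bullet>c v) = 0 \<and> Re ((A *\<^sub>v v) \<bullet>c v) \<ge> 0)"

definition density_op :: "nat \<Rightarrow> complex mat \<Rightarrow> bool" where
  "density_op d \<rho> \<longleftrightarrow> psd d \<rho> \<and> mtrace \<rho> = 1"

definition lin_map :: "nat \<Rightarrow> nat \<Rightarrow> (complex mat \<Rightarrow> complex mat) \<Rightarrow> bool" where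
  "lin_map d d' F \<longleftrightarrow>
     (\<forall>X \<in> carrier_mat d d. F X \<in> carrier_mat d' d') \<and>
     (\<forall>X \<in> carrier_mat d d. \<forall>Y \<in> carrier_mat d d. F (X + Y) = F X + F Y) \<and>
     (\<forall>X \<in> carrier_mat d d. \<forall>c. F (c \<cdot>\<^sub>m X) = c \<cdot>\<^sub>m F X)"

definition block :: "nat \<Rightarrow> complex mat \<Rightarrow> nat \<Rightarrow> nat \<Rightarrow> complex mat" where
  "block d X a b = mat d d (\<lambda>(i, j). X $$ (a * d + i, b * d + j))"

(* (id_k \<otimes> F) applied to a (k d) x (k d) matrix, giving a (k d') x (k d') matrix *)
definition ampliate :: "nat \<Rightarrow> nat \<Rightarrow> nat \<Rightarrow> (complex mat \<Rightarrow> complex mat) \<Rightarrow> complex mat \<Rightarrow> complex mat" where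
  "ampliate k d d' F X =
     mat (k * d') (k * d') (\<lambda>(i, j). F (block d X (i div d') (j div d')) $$ (i mod d', j mod d'))"

definition completely_positive :: "nat \<Rightarrow> nat \<Rightarrow> (complex mat \<Rightarrow> complex mat) \<Rightarrow> bool" where
  "completely_positive d d' F \<longleftrightarrow>
     (\<forall>k. \<forall>X. psd (k * d) X \<longrightarrow> psd (k * d') (ampliate k d d' F X))"

definition trace_preserving :: "nat \<Rightarrow> (complex mat \<Rightarrow> complex mat) \<Rightarrow> bool" where
  "trace_preserving d F \<longleftrightarrow> (\<forall>X \<in> carrier_mat d d. mtrace (F X) = mtrace X)"

definition CPTP :: "nat \<Rightarrow> nat \<Rightarrow> (complex mat \<Rightarrow> complex mat) \<Rightarrow> bool" where
  "CPTP d d' F \<longleftrightarrow> lin_map d d' F \<and> completely_positive d d' F \<and> trace_preserving d F"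

definition proj_family :: "nat \<Rightarrow> nat \<Rightarrow> (nat \<Rightarrow> complex mat) \<Rightarrow> bool" where
  "proj_family d m P \<longleftrightarrow>
     (\<forall>b<m. P b \<in> carrier_mat d d \<and> mat_adjoint (P b) = P b \<and> P b * P b = P b) \<and>
     (\<forall>b<m. \<forall>b'<m. b \<noteq> b' \<longrightarrow> P b * P b' = 0\<^sub>m d d) \<and>
     foldr (+) (map P [0..<m]) (0\<^sub>m d d) = 1\<^sub>m d"

(* Multi-time process: dimensions d k, initial state \<rho> at t_0, channels Ch k : t_(k-1) \<rightarrow> t_k
   for 1 \<le> k \<le> n, and projector families P k b (b < m k) at each time t_k, k \<le> n. *)
definition measurements :: "nat \<Rightarrow> (nat \<Rightarrow> nat) \<Rightarrow> (nat \<Rightarrow> nat) \<Rightarrow> (nat \<Rightarrow> nat \<Rightarrow> complex mat) \<Rightarrow> bool" where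
  "measurements n d m P \<longleftrightarrow> (\<forall>k\<le>n. proj_family (d k) (m k) (P k))"

definition outcomes :: "nat \<Rightarrow> (nat \<Rightarrow> nat) \<Rightarrow> (nat \<Rightarrow> nat) set" where
  "outcomes n m = Pi\<^sub>E {..n} (\<lambda>k. {..<m k})"

fun right_op :: "complex mat \<Rightarrow> (nat \<Rightarrow> complex mat \<Rightarrow> complex mat) \<Rightarrow> (nat \<Rightarrow> nat \<Rightarrow> complex mat)
                 \<Rightarrow> (nat \<Rightarrow> nat) \<Rightarrow> nat \<Rightarrow> complex mat" where
  "right_op \<rho> E P b 0 = \<rho> * P 0 (b 0)"
| "right_op \<rho> E P b (Suc k) = E (Suc k) (right_op \<rho> E P b k) * P (Suc k) (b (Suc k))"

fun left_op :: "complex mat \<Rightarrow> (nat \<Rightarrow> complex mat \<Rightarrow> complex mat) \<Rightarrow> (nat \<Rightarrow> nat \<Rightarrow> complex mat)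
                 \<Rightarrow> (nat \<Rightarrow> nat) \<Rightarrow> nat \<Rightarrow> complex mat" where
  "left_op \<rho> E P a 0 = P 0 (a 0) * \<rho>"
| "left_op \<rho> E P a (Suc k) = P (Suc k) (a (Suc k)) * E (Suc k) (left_op \<rho> E P a k)"

fun doubled_op :: "complex mat \<Rightarrow> (nat \<Rightarrow> complex mat \<Rightarrow> complex mat) \<Rightarrow> (nat \<Rightarrow> nat \<Rightarrow> complex mat)
                 \<Rightarrow> (nat \<Rightarrow> nat) \<Rightarrow> (nat \<Rightarrow> nat) \<Rightarrow> nat \<Rightarrow> complex mat" where
  "doubled_op \<rho> E P a b 0 = P 0 (a 0) * \<rho> * P 0 (b 0)"
| "doubled_op \<rho> E P a b (Suc k) =
     P (Suc k) (a (Suc k)) * E (Suc k) (doubled_op \<rho> E P a b k) * P (Suc k) (b (Suc k))"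

definition Q_right where "Q_right n \<rho> E P b = mtrace (right_op \<rho> E P b n)"
definition Q_left where "Q_left n \<rho> E P a = mtrace (left_op \<rho> E P a n)"
definition Q_doubled where "Q_doubled n \<rho> E P a b = mtrace (doubled_op \<rho> E P a b n)"

definition neg_right :: "nat \<Rightarrow> (nat \<Rightarrow> nat) \<Rightarrow> complex mat \<Rightarrow> (nat \<Rightarrow> complex mat \<Rightarrow> complex mat)
                          \<Rightarrow> (nat \<Rightarrow> nat \<Rightarrow> complex mat) \<Rightarrow> real" where
  "neg_right n m \<rho> E P = (\<Sum>b\<in>outcomes n m. cmod (Q_right n \<rho> E P b)) - 1"

definition neg_left :: "nat \<Rightarrow> (nat \<Rightarrow> nat) \<Rightarrow> complex mat \<Rightarrow> (nat \<Rightarrow> complex mat \<Rightarrow> complex mat)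
                          \<Rightarrow> (nat \<Rightarrow> nat \<Rightarrow> complex mat) \<Rightarrow> real" where
  "neg_left n m \<rho> E P = (\<Sum>a\<in>outcomes n m. cmod (Q_left n \<rho> E P a)) - 1"

definition neg_doubled :: "nat \<Rightarrow> (nat \<Rightarrow> nat) \<Rightarrow> complex mat \<Rightarrow> (nat \<Rightarrow> complex mat \<Rightarrow> complex mat)
                          \<Rightarrow> (nat \<Rightarrow> nat \<Rightarrow> complex mat) \<Rightarrow> real" where
  "neg_doubled n m \<rho> E P =
     (\<Sum>(a, b)\<in>outcomes n m \<times> outcomes n m. cmod (Q_doubled n \<rho> E P a b)) - 1"

definition mix_map :: "real \<Rightarrow> (complex mat \<Rightarrow> complex mat) \<Rightarrow> (complex mat \<Rightarrow> complex mat) \<Rightarrow> complex mat \<Rightarrow> complex mat" where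
  "mix_map p F G = (\<lambda>X. complex_of_real p \<cdot>\<^sub>m F X + complex_of_real (1 - p) \<cdot>\<^sub>m G X)"

end

theory Submission
  imports Defs
begin

fun iter :: "(nat \<Rightarrow> complex mat \<Rightarrow> complex mat) \<Rightarrow> complex mat \<Rightarrow> (nat \<Rightarrow> complex mat \<Rightarrow> complex mat) \<Rightarrow> nat \<Rightarrow> complex mat" where
  "iter S X0 G 0 = X0"
| "iter S X0 G (Suc k) = S (Suc k) (G (Suc k) (iter S X0 G k))"

lemma lin_comb:
  assumes "lin_map d d' F" "A \<in> carrier_mat d d" "B \<in> carrier_mat d d"
  shows "F (a \<cdot>\<^sub>m A + c \<cdot>\<^sub>m B) = a \<cdot>\<^sub>m F A + c \<cdot>\<^sub>m F B"
  using assms unfolding lin_map_def by (simp add: smult_carrier_mat)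

lemma lin_carrier:
  assumes "lin_map d d' F" "A \<in> carrier_mat d d"
  shows "F A \<in> carrier_mat d' d'"
  using assms unfolding lin_map_def by simp

lemma iter_main:
  fixes lam :: real
  assumes X0: "X0 \<in> carrier_mat (d 0) (d 0)"
    and chans: "\<forall>k\<in>{1..n} - {j}. lin_map (d (k - 1)) (d k) (Ch k)"
    and j: "j \<in> {1..n}"
    and E: "lin_map (d (j - 1)) (d j) E"
    and K: "lin_map (d (j - 1)) (d j) K"
    and Sc: "\<forall>k\<le>n. \<forall>Y \<in> carrier_mat (d k) (d k). S k Y \<in> carrier_mat (d k) (d k)"
    and Sl: "\<forall>k\<le>n. \<forall>Y \<in> carrier_mat (d k) (d k). \<forall>Z \<in> carrier_mat (d k) (d k). \<forall>a c.
              S k (a \<cdot>\<^sub>m Y + c \<cdot>\<^sub>m Z) = a \<cdot>\<^sub>m S k Y + c \<cdot>\<^sub>m S k Z"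
  shows "k \<le> n \<Longrightarrow> iter S X0 (Ch(j := mix_map lam E K)) k
            = complex_of_real lam \<cdot>\<^sub>m iter S X0 (Ch(j := E)) k + complex_of_real (1 - lam) \<cdot>\<^sub>m iter S X0 (Ch(j := K)) k
         \<and> iter S X0 (Ch(j := E)) k \<in> carrier_mat (d k) (d k)
         \<and> iter S X0 (Ch(j := K)) k \<in> carrier_mat (d k) (d k)
         \<and> (k < j \<longrightarrow> iter S X0 (Ch(j := E)) k = iter S X0 (Ch(j := K)) k)"
proof (induction k)
  case 0
  have "complex_of_real lam \<cdot>\<^sub>m X0 + complex_of_real (1 - lam) \<cdot>\<^sub>m X0 = (complex_of_real lam + complex_of_real (1 - lam)) \<cdot>\<^sub>m X0"
    by (rule add_smult_distrib_right_mat[OF X0, symmetric])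
  also have "\<dots> = X0" using X0 by (intro eq_matI) auto
  finally show ?case using X0 by simp
next
  case (Suc k)
  let ?M = "iter S X0 (Ch(j := mix_map lam E K)) k"
  let ?A = "iter S X0 (Ch(j := E)) k"
  let ?B = "iter S X0 (Ch(j := K)) k"
  have IH: "?M = complex_of_real lam \<cdot>\<^sub>m ?A + complex_of_real (1 - lam) \<cdot>\<^sub>m ?B"
     "?A \<in> carrier_mat (d k) (d k)" "?B \<in> carrier_mat (d k) (d k)" "k < j \<longrightarrow> ?A = ?B"
    using Suc.IH[OF Suc_leD[OF Suc.prems]] by blast+
  have Sk: "Suc k \<le> n" using Suc by simp
  show ?case
  proof (cases "Suc k = j")
    case True
    have AB: "?A = ?B" using IH True by simp
    have "?M = (complex_of_real lam + complex_of_real (1 - lam)) \<cdot>\<^sub>m ?A"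
      using IH(1) AB add_smult_distrib_right_mat[OF IH(2), symmetric] by simp
    then have M: "?M = ?A" using IH(2) by (auto intro!: eq_matI)
    have dk: "d (j - 1) = d k" using True by auto
    have EA: "E ?A \<in> carrier_mat (d (Suc k)) (d (Suc k))"
      using lin_carrier[OF E] IH dk True by auto
    have KA: "K ?A \<in> carrier_mat (d (Suc k)) (d (Suc k))"
      using lin_carrier[OF K] IH dk True by auto
    have "iter S X0 (Ch(j := mix_map lam E K)) (Suc k)
       = S (Suc k) (complex_of_real lam \<cdot>\<^sub>m E ?A + complex_of_real (1 - lam) \<cdot>\<^sub>m K ?A)"
      unfolding iter.simps using M True by (simp add: mix_map_def)
    also have "\<dots> = complex_of_real lam \<cdot>\<^sub>m S (Suc k) (E ?A) + complex_of_real (1 - lam) \<cdot>\<^sub>m S (Suc k) (K ?A)"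
      using Sl Sk EA KA by blast
    finally have c1: "iter S X0 (Ch(j := mix_map lam E K)) (Suc k) = complex_of_real lam \<cdot>\<^sub>m S (Suc k) (E ?A) + complex_of_real (1 - lam) \<cdot>\<^sub>m S (Suc k) (K ?A)" .
    have iE: "iter S X0 (Ch(j := E)) (Suc k) = S (Suc k) (E ?A)" unfolding iter.simps using True by simp
    have iK: "iter S X0 (Ch(j := K)) (Suc k) = S (Suc k) (K ?A)" unfolding iter.simps using True AB by simp
    have c2: "S (Suc k) (E ?A) \<in> carrier_mat (d (Suc k)) (d (Suc k))" using Sc Sk EA by blast
    have c3: "S (Suc k) (K ?A) \<in> carrier_mat (d (Suc k)) (d (Suc k))" using Sc Sk KA by blast
    show ?thesis unfolding iE iK using c1 c2 c3 True by (simp del: fun_upd_apply)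
  next
    case False
    have ch: "lin_map (d k) (d (Suc k)) (Ch (Suc k))" using chans Sk False by force
    have CA: "Ch (Suc k) ?A \<in> carrier_mat (d (Suc k)) (d (Suc k))"
      using lin_carrier[OF ch] IH by auto
    have CB: "Ch (Suc k) ?B \<in> carrier_mat (d (Suc k)) (d (Suc k))"
      using lin_carrier[OF ch] IH by auto
    have "iter S X0 (Ch(j := mix_map lam E K)) (Suc k)
       = S (Suc k) (Ch (Suc k) (complex_of_real lam \<cdot>\<^sub>m ?A + complex_of_real (1 - lam) \<cdot>\<^sub>m ?B))"
      using IH False by simp
    also have "\<dots> = S (Suc k) (complex_of_real lam \<cdot>\<^sub>m Ch (Suc k) ?A + complex_of_real (1 - lam) \<cdot>\<^sub>m Ch (Suc k) ?B)"
      using lin_comb[OF ch] IH by simp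
    also have "\<dots> = complex_of_real lam \<cdot>\<^sub>m S (Suc k) (Ch (Suc k) ?A) + complex_of_real (1 - lam) \<cdot>\<^sub>m S (Suc k) (Ch (Suc k) ?B)"
      using Sl Sk CA CB by blast
    finally have c1: "iter S X0 (Ch(j := mix_map lam E K)) (Suc k) = complex_of_real lam \<cdot>\<^sub>m S (Suc k) (Ch (Suc k) ?A) + complex_of_real (1 - lam) \<cdot>\<^sub>m S (Suc k) (Ch (Suc k) ?B)" .
    have iE: "iter S X0 (Ch(j := E)) (Suc k) = S (Suc k) (Ch (Suc k) ?A)" unfolding iter.simps using False by simp
    have iK: "iter S X0 (Ch(j := K)) (Suc k) = S (Suc k) (Ch (Suc k) ?B)" unfolding iter.simps using False by simp
    have c2: "S (Suc k) (Ch (Suc k) ?A) \<in> carrier_mat (d (Suc k)) (d (Suc k))" using Sc Sk CA by blast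
    have c3: "S (Suc k) (Ch (Suc k) ?B) \<in> carrier_mat (d (Suc k)) (d (Suc k))" using Sc Sk CB by blast
    have c4: "Suc k < j \<longrightarrow> ?A = ?B" using IH(4) by simp
    show ?thesis unfolding iE iK using c1 c2 c3 c4 by (simp del: fun_upd_apply)
  qed
qed

lemma mtrace_comb:
  assumes "A \<in> carrier_mat k k" "B \<in> carrier_mat k k"
  shows "mtrace (a \<cdot>\<^sub>m A + c \<cdot>\<^sub>m B) = a * mtrace A + c * mtrace B"
  using assms unfolding mtrace_def by (simp add: sum.distrib sum_distrib_left)

lemma cmod_comb:
  fixes lam :: real
  assumes "0 \<le> lam" "lam \<le> 1"
  shows "cmod (complex_of_real lam * x + complex_of_real (1 - lam) * y) \<le> lam * cmod x + (1 - lam) * cmod y"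
proof -
  have "cmod (complex_of_real lam * x + complex_of_real (1 - lam) * y)
     \<le> cmod (complex_of_real lam * x) + cmod (complex_of_real (1 - lam) * y)"
    by (rule norm_triangle_ineq)
  also have "\<dots> = lam * cmod x + (1 - lam) * cmod y"
    using assms by (simp add: norm_mult del: of_real_diff)
  finally show ?thesis .
qed

lemma sum_comb:
  fixes lam :: real and f g h :: "'a \<Rightarrow> real"
  assumes "\<And>x. x \<in> A \<Longrightarrow> f x \<le> lam * g x + (1 - lam) * h x"
  shows "(\<Sum>x\<in>A. f x) - 1 \<le> lam * ((\<Sum>x\<in>A. g x) - 1) + (1 - lam) * ((\<Sum>x\<in>A. h x) - 1)"
proof -
  have "(\<Sum>x\<in>A. f x) \<le> (\<Sum>x\<in>A. lam * g x + (1 - lam) * h x)"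
    using assms by (rule sum_mono)
  also have "\<dots> = lam * (\<Sum>x\<in>A. g x) + (1 - lam) * (\<Sum>x\<in>A. h x)"
    by (simp add: sum.distrib sum_distrib_left)
  finally show ?thesis by (simp add: algebra_simps)
qed

theorem mainTheorem8:
  fixes n j :: nat and d m :: "nat \<Rightarrow> nat" and \<rho> :: "complex mat"
    and Ch :: "nat \<Rightarrow> complex mat \<Rightarrow> complex mat"
    and \<E> \<K> :: "complex mat \<Rightarrow> complex mat"
    and P :: "nat \<Rightarrow> nat \<Rightarrow> complex mat" and lam :: real
  assumes dims: "\<forall>k\<le>n. d k > 0"
    and rho: "density_op (d 0) \<rho>"
    and chans: "\<forall>k\<in>{1..n} - {j}. CPTP (d (k - 1)) (d k) (Ch k)"
    and meas: "measurements n d m P"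
    and j: "j \<in> {1..n}"
    and E: "CPTP (d (j - 1)) (d j) \<E>"
    and K: "CPTP (d (j - 1)) (d j) \<K>"
    and hlam: "0 \<le> lam" "lam \<le> 1"
  shows "(neg_right n m \<rho> (Ch(j := mix_map lam \<E> \<K>)) P
           \<le> lam * neg_right n m \<rho> (Ch(j := \<E>)) P + (1 - lam) * neg_right n m \<rho> (Ch(j := \<K>)) P)
       \<and> (neg_left n m \<rho> (Ch(j := mix_map lam \<E> \<K>)) P
           \<le> lam * neg_left n m \<rho> (Ch(j := \<E>)) P + (1 - lam) * neg_left n m \<rho> (Ch(j := \<K>)) P)
       \<and> (neg_doubled n m \<rho> (Ch(j := mix_map lam \<E> \<K>)) P
           \<le> lam * neg_doubled n m \<rho> (Ch(j := \<E>)) P + (1 - lam) * neg_doubled n m \<rho> (Ch(j := \<K>)) P)"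
proof -
  have rc: "\<rho> \<in> carrier_mat (d 0) (d 0)" using rho unfolding density_op_def psd_def by simp
  have Pc: "\<And>k b. k \<le> n \<Longrightarrow> b < m k \<Longrightarrow> P k b \<in> carrier_mat (d k) (d k)"
    using meas unfolding measurements_def proj_family_def by blast
  have chl: "\<forall>k\<in>{1..n} - {j}. lin_map (d (k - 1)) (d k) (Ch k)"
    using chans unfolding CPTP_def by blast
  have El: "lin_map (d (j - 1)) (d j) \<E>" using E unfolding CPTP_def by blast
  have Kl: "lin_map (d (j - 1)) (d j) \<K>" using K unfolding CPTP_def by blast
  have outk: "\<And>b k. b \<in> outcomes n m \<Longrightarrow> k \<le> n \<Longrightarrow> b k < m k"
    unfolding outcomes_def by (auto simp: PiE_def Pi_def)
  note main = iter_main[OF _ chl j El Kl, where lam = lam]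
  have cm: "\<And>x y. cmod (complex_of_real lam * x + complex_of_real (1 - lam) * y) \<le> lam * cmod x + (1 - lam) * cmod y"
    using cmod_comb hlam by blast
  have R: "\<And>b G. right_op \<rho> G P b k = iter (\<lambda>k Y. Y * P k (b k)) (\<rho> * P 0 (b 0)) G k" for k
    by (induction k) auto
  have L: "\<And>a G. left_op \<rho> G P a k = iter (\<lambda>k Y. P k (a k) * Y) (P 0 (a 0) * \<rho>) G k" for k
    by (induction k) auto
  have D: "\<And>a b G. doubled_op \<rho> G P a b k = iter (\<lambda>k Y. P k (a k) * Y * P k (b k)) (P 0 (a 0) * \<rho> * P 0 (b 0)) G k" for k
    by (induction k) auto
  have part1: "neg_right n m \<rho> (Ch(j := mix_map lam \<E> \<K>)) P
           \<le> lam * neg_right n m \<rho> (Ch(j := \<E>)) P + (1 - lam) * neg_right n m \<rho> (Ch(j := \<K>)) P"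
    unfolding neg_right_def
  proof (rule sum_comb)
    fix b assume b: "b \<in> outcomes n m"
    let ?S = "\<lambda>k Y. Y * P k (b k)"
    let ?X = "\<rho> * P 0 (b 0)"
    have X0: "?X \<in> carrier_mat (d 0) (d 0)" using rc Pc[OF le0 outk[OF b le0]] by (auto intro: mult_carrier_mat)
    have Sc: "\<forall>k\<le>n. \<forall>Y \<in> carrier_mat (d k) (d k). ?S k Y \<in> carrier_mat (d k) (d k)"
      using Pc[OF _ outk[OF b]] by (auto intro!: mult_carrier_mat)
    have Sl: "\<forall>k\<le>n. \<forall>Y \<in> carrier_mat (d k) (d k). \<forall>Z \<in> carrier_mat (d k) (d k). \<forall>a c.
              ?S k (a \<cdot>\<^sub>m Y + c \<cdot>\<^sub>m Z) = a \<cdot>\<^sub>m ?S k Y + c \<cdot>\<^sub>m ?S k Z"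
    proof (intro allI impI ballI)
      fix k and Y Z :: "complex mat" and a c :: complex assume k: "k \<le> n" and Y: "Y \<in> carrier_mat (d k) (d k)" and Z: "Z \<in> carrier_mat (d k) (d k)"
      have Pk: "P k (b k) \<in> carrier_mat (d k) (d k)" using Pc[OF k outk[OF b k]] .
      have "(a \<cdot>\<^sub>m Y + c \<cdot>\<^sub>m Z) * P k (b k) = (a \<cdot>\<^sub>m Y) * P k (b k) + (c \<cdot>\<^sub>m Z) * P k (b k)"
        using Y Z Pk by (intro add_mult_distrib_mat) auto
      also have "\<dots> = a \<cdot>\<^sub>m (Y * P k (b k)) + c \<cdot>\<^sub>m (Z * P k (b k))"
        using Y Z Pk by (simp add: mult_smult_assoc_mat)
      finally show "?S k (a \<cdot>\<^sub>m Y + c \<cdot>\<^sub>m Z) = a \<cdot>\<^sub>m ?S k Y + c \<cdot>\<^sub>m ?S k Z" .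
    qed
    note M = main[OF X0 Sc Sl order_refl]
    note Mt = trans[OF arg_cong[where f=mtrace, OF M[THEN conjunct1]] mtrace_comb[OF M[THEN conjunct2, THEN conjunct1] M[THEN conjunct2, THEN conjunct2, THEN conjunct1]]]
    show "cmod (Q_right n \<rho> (Ch(j := mix_map lam \<E> \<K>)) P b)
          \<le> lam * cmod (Q_right n \<rho> (Ch(j := \<E>)) P b) + (1 - lam) * cmod (Q_right n \<rho> (Ch(j := \<K>)) P b)"
      unfolding Q_right_def R Mt by (rule cm)
  qed
  have part2: "neg_left n m \<rho> (Ch(j := mix_map lam \<E> \<K>)) P
           \<le> lam * neg_left n m \<rho> (Ch(j := \<E>)) P + (1 - lam) * neg_left n m \<rho> (Ch(j := \<K>)) P"
    unfolding neg_left_def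
  proof (rule sum_comb)
    fix b assume b: "b \<in> outcomes n m"
    let ?S = "\<lambda>k Y. P k (b k) * Y"
    let ?X = "P 0 (b 0) * \<rho>"
    have X0: "?X \<in> carrier_mat (d 0) (d 0)" using rc Pc[OF le0 outk[OF b le0]] by (auto intro: mult_carrier_mat)
    have Sc: "\<forall>k\<le>n. \<forall>Y \<in> carrier_mat (d k) (d k). ?S k Y \<in> carrier_mat (d k) (d k)"
      using Pc[OF _ outk[OF b]] by (auto intro!: mult_carrier_mat)
    have Sl: "\<forall>k\<le>n. \<forall>Y \<in> carrier_mat (d k) (d k). \<forall>Z \<in> carrier_mat (d k) (d k). \<forall>a c.
              ?S k (a \<cdot>\<^sub>m Y + c \<cdot>\<^sub>m Z) = a \<cdot>\<^sub>m ?S k Y + c \<cdot>\<^sub>m ?S k Z"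
    proof (intro allI impI ballI)
      fix k and Y Z :: "complex mat" and a c :: complex assume k: "k \<le> n" and Y: "Y \<in> carrier_mat (d k) (d k)" and Z: "Z \<in> carrier_mat (d k) (d k)"
      have Pk: "P k (b k) \<in> carrier_mat (d k) (d k)" using Pc[OF k outk[OF b k]] .
      have "P k (b k) * (a \<cdot>\<^sub>m Y + c \<cdot>\<^sub>m Z) = P k (b k) * (a \<cdot>\<^sub>m Y) + P k (b k) * (c \<cdot>\<^sub>m Z)"
        using Y Z Pk by (intro mult_add_distrib_mat) auto
      also have "\<dots> = a \<cdot>\<^sub>m (P k (b k) * Y) + c \<cdot>\<^sub>m (P k (b k) * Z)"
        using Y Z Pk by (simp add: mult_smult_distrib)
      finally show "?S k (a \<cdot>\<^sub>m Y + c \<cdot>\<^sub>m Z) = a \<cdot>\<^sub>m ?S k Y + c \<cdot>\<^sub>m ?S k Z" .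
    qed
    note M = main[OF X0 Sc Sl order_refl]
    note Mt = trans[OF arg_cong[where f=mtrace, OF M[THEN conjunct1]] mtrace_comb[OF M[THEN conjunct2, THEN conjunct1] M[THEN conjunct2, THEN conjunct2, THEN conjunct1]]]
    show "cmod (Q_left n \<rho> (Ch(j := mix_map lam \<E> \<K>)) P b)
          \<le> lam * cmod (Q_left n \<rho> (Ch(j := \<E>)) P b) + (1 - lam) * cmod (Q_left n \<rho> (Ch(j := \<K>)) P b)"
      unfolding Q_left_def L Mt by (rule cm)
  qed
  have part3: "neg_doubled n m \<rho> (Ch(j := mix_map lam \<E> \<K>)) P
           \<le> lam * neg_doubled n m \<rho> (Ch(j := \<E>)) P + (1 - lam) * neg_doubled n m \<rho> (Ch(j := \<K>)) P"
    unfolding neg_doubled_def split_def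
  proof (rule sum_comb)
    fix ab assume ab: "ab \<in> outcomes n m \<times> outcomes n m"
    obtain a b where abe: "ab = (a, b)" by force
    have a: "a \<in> outcomes n m" and b: "b \<in> outcomes n m" using ab abe by auto
    let ?S = "\<lambda>k Y. P k (a k) * Y * P k (b k)"
    let ?X = "P 0 (a 0) * \<rho> * P 0 (b 0)"
    have X0: "?X \<in> carrier_mat (d 0) (d 0)" using rc Pc[OF le0 outk[OF b le0]] Pc[OF le0 outk[OF a le0]] by (auto intro!: mult_carrier_mat)
    have Sc: "\<forall>k\<le>n. \<forall>Y \<in> carrier_mat (d k) (d k). ?S k Y \<in> carrier_mat (d k) (d k)"
      using Pc[OF _ outk[OF b]] Pc[OF _ outk[OF a]] by (auto intro!: mult_carrier_mat)
    have Sl: "\<forall>k\<le>n. \<forall>Y \<in> carrier_mat (d k) (d k). \<forall>Z \<in> carrier_mat (d k) (d k). \<forall>a' c.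
              ?S k (a' \<cdot>\<^sub>m Y + c \<cdot>\<^sub>m Z) = a' \<cdot>\<^sub>m ?S k Y + c \<cdot>\<^sub>m ?S k Z"
    proof (intro allI impI ballI)
      fix k and Y Z :: "complex mat" and a' c :: complex assume k: "k \<le> n" and Y: "Y \<in> carrier_mat (d k) (d k)" and Z: "Z \<in> carrier_mat (d k) (d k)"
      have Pk: "P k (b k) \<in> carrier_mat (d k) (d k)" using Pc[OF k outk[OF b k]] .
      have Pa: "P k (a k) \<in> carrier_mat (d k) (d k)" using Pc[OF k outk[OF a k]] .
      have "P k (a k) * (a' \<cdot>\<^sub>m Y + c \<cdot>\<^sub>m Z) = P k (a k) * (a' \<cdot>\<^sub>m Y) + P k (a k) * (c \<cdot>\<^sub>m Z)"
        using Y Z Pa by (intro mult_add_distrib_mat) auto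
      also have "\<dots> = a' \<cdot>\<^sub>m (P k (a k) * Y) + c \<cdot>\<^sub>m (P k (a k) * Z)"
        using Y Z Pa by (simp add: mult_smult_distrib)
      finally have e1: "P k (a k) * (a' \<cdot>\<^sub>m Y + c \<cdot>\<^sub>m Z) = a' \<cdot>\<^sub>m (P k (a k) * Y) + c \<cdot>\<^sub>m (P k (a k) * Z)" .
      have "(a' \<cdot>\<^sub>m (P k (a k) * Y) + c \<cdot>\<^sub>m (P k (a k) * Z)) * P k (b k)
           = (a' \<cdot>\<^sub>m (P k (a k) * Y)) * P k (b k) + (c \<cdot>\<^sub>m (P k (a k) * Z)) * P k (b k)"
        using Y Z Pa Pk by (intro add_mult_distrib_mat) auto
      also have "\<dots> = a' \<cdot>\<^sub>m (P k (a k) * Y * P k (b k)) + c \<cdot>\<^sub>m (P k (a k) * Z * P k (b k))"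
        by (simp only: mult_smult_assoc_mat[OF mult_carrier_mat[OF Pa Y] Pk] mult_smult_assoc_mat[OF mult_carrier_mat[OF Pa Z] Pk])
      finally show "?S k (a' \<cdot>\<^sub>m Y + c \<cdot>\<^sub>m Z) = a' \<cdot>\<^sub>m ?S k Y + c \<cdot>\<^sub>m ?S k Z" using e1 by simp
    qed
    note M = main[OF X0 Sc Sl order_refl]
    note Mt = trans[OF arg_cong[where f=mtrace, OF M[THEN conjunct1]] mtrace_comb[OF M[THEN conjunct2, THEN conjunct1] M[THEN conjunct2, THEN conjunct2, THEN conjunct1]]]
    show "cmod (Q_doubled n \<rho> (Ch(j := mix_map lam \<E> \<K>)) P (fst ab) (snd ab))
          \<le> lam * cmod (Q_doubled n \<rho> (Ch(j := \<E>)) P (fst ab) (snd ab)) + (1 - lam) * cmod (Q_doubled n \<rho> (Ch(j := \<K>)) P (fst ab) (snd ab))"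
      unfolding Q_doubled_def D abe fst_conv snd_conv Mt by (rule cm)
  qed
  show ?thesis using part1 part2 part3 by blast
qed

end
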